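(* Let $\alpha$ be a unit-speed curve in $\mathbb{R}^3$ with nonvanishing curvature, let $\alpha_T$ be its tangent indicatrix with arc length $s_T$ and Frenet apparatus $\{T_T,N_T,B_T,\kappa_T,\tau_T\}$, and let $\beta$ be an evolute-direction curve of $\alpha_T$ (an $X$-direction curve of $\alpha_T$ with $N_\beta=T_T$). Then there is an antiderivative $\varphi=\int\tau_T\,ds_T$ of $\tau_T$ with respect to $s_T$ such that $$\kappa_\beta=-\kappa_T\sin\varphi,\qquad \tau_\beta=\kappa_T\cos\varphi.$$ Moreover, $$\kappa_T=\sqrt{\kappa_\beta^2+\tau_\beta^2},\qquad \tau_T=\frac{\kappa_\beta^2}{\kappa_\beta^2+\tau_\beta^2}\,\frac{d}{ds_T}\Big(\frac{\tau_\beta}{\kappa_\beta}\Big).$$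
   Context: Let $\alpha:I\subset\mathbb{R}\to\mathbb{R}^3$ be a unit-speed curve with arc length $s$, curvature $\kappa>0$, torsion $\tau$ and Frenet frame $\{T,N,B\}$. The tangent indicatrix of $\alpha$ is the curve $\alpha_T=T$ on the unit sphere. Its arc length is $s_T=\int\kappa\,ds$. Its Frenet apparatus is $\{T_T,N_T,B_T,\kappa_T,\tau_T\}$, with $\frac{dT_T}{ds_T}=\kappa_TN_T$, $\frac{dN_T}{ds_T}=-\kappa_TT_T+\tau_TB_T$ and $\frac{dB_T}{ds_T}=-\tau_TN_T$. Let $x,y,z$ be real functions of $s_T$ with $x^2+y^2+z^2=1$, and set $X=xT_T+yN_T+zB_T$. An integral curve $\beta$ of $X$, meaning $d\beta/ds_T=X$, is an $X$-direction curve of $\alpha_T$. It has unit speed with arc length $s_T$. It is regarded as a Frenet curve with frame $\{T_\beta=X,N_\beta,B_\beta\}$, curvature $\kappa_\beta>0$ and torsion $\tau_\beta$, with derivatives taken with respect to $s_T$. $\beta$ is an evolute-direction curve of $\alpha_T$ if $N_\beta=T_T$. *)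

theory Defs
  imports "HOL-Analysis.Analysis" "HOL-Analysis.Cross3"
begin

definition frenet_curve_on ::
  "real set \<Rightarrow> (real \<Rightarrow> real^3) \<Rightarrow> (real \<Rightarrow> real^3) \<Rightarrow> (real \<Rightarrow> real^3)
     \<Rightarrow> (real \<Rightarrow> real^3) \<Rightarrow> (real \<Rightarrow> real) \<Rightarrow> (real \<Rightarrow> real) \<Rightarrow> bool" where
  "frenet_curve_on S c t n b k tau \<longleftrightarrow>
    (\<forall>s\<in>S.
       (c has_vector_derivative t s) (at s) \<and>
       (t has_vector_derivative (k s *\<^sub>R n s)) (at s) \<and>
       (n has_vector_derivative (- (k s *\<^sub>R t s) + tau s *\<^sub>R b s)) (at s) \<and>
       (b has_vector_derivative (- (tau s *\<^sub>R n s))) (at s) \<and>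
       norm (t s) = 1 \<and> norm (n s) = 1 \<and> t s \<bullet> n s = 0 \<and>
       b s = cross3 (t s) (n s) \<and> k s > 0)"

end

theory Submission
  imports Defs
begin

lemma vd_inner:
  assumes "(f has_vector_derivative f') (at u)" "(g has_vector_derivative g') (at u)"
  shows "((\<lambda>v. f v \<bullet> g v) has_real_derivative (f' \<bullet> g u + f u \<bullet> g')) (at u)"
proof -
  have "((\<lambda>v. f v \<bullet> g v) has_derivative (\<lambda>h. f u \<bullet> (h *\<^sub>R g') + (h *\<^sub>R f') \<bullet> g u)) (at u)"
    using has_derivative_inner[OF assms[unfolded has_vector_derivative_def]] by simp
  moreover have "(\<lambda>h. f u \<bullet> (h *\<^sub>R g') + (h *\<^sub>R f') \<bullet> g u) = (\<lambda>h. (f' \<bullet> g u + f u \<bullet> g') * h)"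
    by (auto simp: algebra_simps)
  ultimately show ?thesis by (simp add: has_field_derivative_def)
qed

lemma solve2:
  fixes a b k y z :: real
  assumes "-(a*y) + b*z = k" "-(a*z) - b*y = 0" "y\<^sup>2+z\<^sup>2 = 1"
  shows "a = -k*y \<and> b = k*z"
proof -
  have "a = a*(y\<^sup>2+z\<^sup>2)" using assms(3) by simp
  also have "\<dots> = -y*(-(a*y) + b*z) - z*(-(a*z) - b*y)" by (simp add: algebra_simps power2_eq_square)
  finally have 1: "a = -k*y" using assms(1,2) by simp
  have "b = b*(y\<^sup>2+z\<^sup>2)" using assms(3) by simp
  also have "\<dots> = z*(-(a*y) + b*z) - y*(-(a*z) - b*y)" by (simp add: algebra_simps power2_eq_square)
  finally have 2: "b = k*z" using assms(1,2) by simp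
  show ?thesis using 1 2 by simp
qed

lemma quot_aux: "- ((- (t * y) * y - z * (t * z)) / (y * y)) = t * (y\<^sup>2 + z\<^sup>2) / (y)\<^sup>2" for t y z :: real
proof -
  have "- (t * y) * y - z * (t * z) = - (t * (y\<^sup>2 + z\<^sup>2))" by (simp add: power2_eq_square algebra_simps)
  then show ?thesis by (simp add: power2_eq_square)
qed

lemma triple: "cross3 a c \<bullet> d = a \<bullet> cross3 c d" for a c d :: "real^3"
  by (simp add: cross3_simps)

lemma cross_cross_same: "cross3 a (cross3 a c) = (a \<bullet> c) *\<^sub>R a - (a \<bullet> a) *\<^sub>R c" for a c :: "real^3"
  by (simp add: cross3_simps forall_3)

lemma frame_facts:
  fixes t n b :: "real^3"
  assumes "norm t = 1" "norm n = 1" "t \<bullet> n = 0" "b = cross3 t n"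
  shows "t \<bullet> t = 1" "n \<bullet> n = 1" "n \<bullet> t = 0" "b \<bullet> t = 0" "b \<bullet> n = 0" "t \<bullet> b = 0" "n \<bullet> b = 0" "b \<bullet> b = 1"
    "cross3 t b = - n"
proof -
  show "t \<bullet> t = 1" "n \<bullet> n = 1" using assms by (simp_all add: dot_square_norm)
  show "n \<bullet> t = 0" using assms by (simp add: inner_commute)
  show "b \<bullet> t = 0" "b \<bullet> n = 0" "t \<bullet> b = 0" "n \<bullet> b = 0" using assms dot_cross_self
    by (auto simp: inner_commute)
  have "(norm b)\<^sup>2 = 1" using norm_cross_dot[of t n] assms by simp
  then show "b \<bullet> b = 1" by (simp add: dot_square_norm)
  show "cross3 t b = - n" using assms cross_cross_same[of t n] by (simp add: dot_square_norm)
qed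
theorem theorem4p3:
  fixes I :: "real set"
    and \<alpha> T N B :: "real \<Rightarrow> real^3" and \<kappa> \<tau> :: "real \<Rightarrow> real"
    and sT :: "real \<Rightarrow> real"
    and \<alpha>T TT NT BT :: "real \<Rightarrow> real^3" and \<kappa>T \<tau>T :: "real \<Rightarrow> real"
    and x y z :: "real \<Rightarrow> real"
    and \<beta> N\<beta> B\<beta> :: "real \<Rightarrow> real^3" and \<kappa>\<beta> \<tau>\<beta> :: "real \<Rightarrow> real"
  assumes I: "open I" "is_interval I" "I \<noteq> {}"
    and alpha: "frenet_curve_on I \<alpha> T N B \<kappa> \<tau>"
    and arclen: "\<forall>s\<in>I. (sT has_real_derivative \<kappa> s) (at s)"
    and indicatrix: "\<forall>s\<in>I. \<alpha>T (sT s) = T s"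
    and alphaT: "frenet_curve_on (sT ` I) \<alpha>T TT NT BT \<kappa>T \<tau>T"
    and unit: "\<forall>u\<in>sT ` I. (x u)\<^sup>2 + (y u)\<^sup>2 + (z u)\<^sup>2 = 1"
    and beta: "frenet_curve_on (sT ` I) \<beta>
                 (\<lambda>u. x u *\<^sub>R TT u + y u *\<^sub>R NT u + z u *\<^sub>R BT u) N\<beta> B\<beta> \<kappa>\<beta> \<tau>\<beta>"
    and evolute: "\<forall>u\<in>sT ` I. N\<beta> u = TT u"
  shows "(\<exists>\<phi>. (\<forall>u\<in>sT ` I. (\<phi> has_real_derivative \<tau>T u) (at u)) \<and>
              (\<forall>u\<in>sT ` I. \<kappa>\<beta> u = - \<kappa>T u * sin (\<phi> u) \<and> \<tau>\<beta> u = \<kappa>T u * cos (\<phi> u)))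
         \<and> (\<forall>u\<in>sT ` I.
              \<kappa>T u = sqrt ((\<kappa>\<beta> u)\<^sup>2 + (\<tau>\<beta> u)\<^sup>2) \<and>
              (\<lambda>v. \<tau>\<beta> v / \<kappa>\<beta> v) differentiable (at u) \<and>
              \<tau>T u = (\<kappa>\<beta> u)\<^sup>2 / ((\<kappa>\<beta> u)\<^sup>2 + (\<tau>\<beta> u)\<^sup>2) * deriv (\<lambda>v. \<tau>\<beta> v / \<kappa>\<beta> v) u)"
proof -
  define J where "J = sT ` I"
  define X where "X = (\<lambda>u. x u *\<^sub>R TT u + y u *\<^sub>R NT u + z u *\<^sub>R BT u)"
  have kpos: "\<And>s. s \<in> I \<Longrightarrow> \<kappa> s > 0" using alpha unfolding frenet_curve_on_def by blast
  have dsT: "\<And>s. s \<in> I \<Longrightarrow> (sT has_real_derivative \<kappa> s) (at s)" using arclen by blast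
  have contsT: "continuous_on I sT"
    using dsT by (meson DERIV_isCont continuous_at_imp_continuous_on)
  have mono: "sT a < sT b" if "a \<in> I" "b \<in> I" "a < b" for a b
  proof -
    have "\<exists>y. DERIV sT t :> y \<and> y > 0" if "a \<le> t" "t \<le> b" for t
    proof -
      have "t \<in> I" using I(2) \<open>a \<in> I\<close> \<open>b \<in> I\<close> that unfolding is_interval_1 by blast
      then show ?thesis using dsT kpos by blast
    qed
    then show ?thesis using DERIV_pos_imp_increasing[OF \<open>a < b\<close>] by blast
  qed
  have inj: "inj_on sT I"
    unfolding inj_on_def by (metis linorder_neqE_linordered_idom mono order_less_irrefl)
  have Jopen: "open J" unfolding J_def using invariance_of_domain[OF contsT I(1) inj] .
  have Jconv: "convex J"
    unfolding J_def using connected_continuous_image[OF contsT] is_interval_connected[OF I(2)]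
      is_interval_connected_1 is_interval_convex_1 by metis
  have fT: "\<And>u. u \<in> J \<Longrightarrow> (TT has_vector_derivative (\<kappa>T u *\<^sub>R NT u)) (at u) \<and>
       (NT has_vector_derivative (- (\<kappa>T u *\<^sub>R TT u) + \<tau>T u *\<^sub>R BT u)) (at u) \<and>
       (BT has_vector_derivative (- (\<tau>T u *\<^sub>R NT u))) (at u) \<and>
       norm (TT u) = 1 \<and> norm (NT u) = 1 \<and> TT u \<bullet> NT u = 0 \<and>
       BT u = cross3 (TT u) (NT u) \<and> \<kappa>T u > 0"
    using alphaT unfolding frenet_curve_on_def J_def by blast
  have fB: "\<And>u. u \<in> J \<Longrightarrow> (X has_vector_derivative (\<kappa>\<beta> u *\<^sub>R N\<beta> u)) (at u) \<and>
       (N\<beta> has_vector_derivative (- (\<kappa>\<beta> u *\<^sub>R X u) + \<tau>\<beta> u *\<^sub>R B\<beta> u)) (at u) \<and>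
       norm (X u) = 1 \<and> X u \<bullet> N\<beta> u = 0 \<and>
       B\<beta> u = cross3 (X u) (N\<beta> u) \<and> \<kappa>\<beta> u > 0"
    using beta unfolding frenet_curve_on_def J_def X_def by blast
  have ev: "\<And>u. u \<in> J \<Longrightarrow> N\<beta> u = TT u" using evolute J_def by blast
  have un: "\<And>u. u \<in> J \<Longrightarrow> (x u)\<^sup>2 + (y u)\<^sup>2 + (z u)\<^sup>2 = 1" using unit J_def by blast
  have ofr: "TT u \<bullet> TT u = 1" "NT u \<bullet> NT u = 1" "NT u \<bullet> TT u = 0" "BT u \<bullet> TT u = 0"
    "BT u \<bullet> NT u = 0" "TT u \<bullet> BT u = 0" "NT u \<bullet> BT u = 0" "BT u \<bullet> BT u = 1"
    "cross3 (TT u) (BT u) = - NT u" "TT u \<bullet> NT u = 0" if "u \<in> J" for u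
    using frame_facts[of "TT u" "NT u" "BT u"] fT[OF that] by auto
  have coords: "X u \<bullet> TT u = x u" "X u \<bullet> NT u = y u" "X u \<bullet> BT u = z u" if "u \<in> J" for u
    using ofr[OF that] by (simp_all add: X_def inner_add_left)
  have x0: "x u = 0" if "u \<in> J" for u
    using fB[OF that] ev[OF that] coords[OF that] by simp
  have yz1: "(y u)\<^sup>2 + (z u)\<^sup>2 = 1" if "u \<in> J" for u
    using un[OF that] x0[OF that] by simp
  have dy: "(y has_real_derivative \<tau>T u * z u) (at u)" if u: "u \<in> J" for u
  proof -
    have "((\<lambda>v. X v \<bullet> NT v) has_real_derivative
        ((\<kappa>\<beta> u *\<^sub>R N\<beta> u) \<bullet> NT u + X u \<bullet> (- (\<kappa>T u *\<^sub>R TT u) + \<tau>T u *\<^sub>R BT u))) (at u)"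
      using fB[OF u] fT[OF u] by (intro vd_inner) auto
    moreover have "(\<kappa>\<beta> u *\<^sub>R N\<beta> u) \<bullet> NT u + X u \<bullet> (- (\<kappa>T u *\<^sub>R TT u) + \<tau>T u *\<^sub>R BT u) = \<tau>T u * z u"
      using ofr[OF u] coords[OF u] x0[OF u] ev[OF u]
      by (simp add: inner_add_right inner_diff_right)
    ultimately show ?thesis
      using Jopen u coords(2) by (metis (no_types, lifting) has_field_derivative_transform_within_open)
  qed
  have dz: "(z has_real_derivative - (\<tau>T u * y u)) (at u)" if u: "u \<in> J" for u
  proof -
    have "((\<lambda>v. X v \<bullet> BT v) has_real_derivative
        ((\<kappa>\<beta> u *\<^sub>R N\<beta> u) \<bullet> BT u + X u \<bullet> (- (\<tau>T u *\<^sub>R NT u)))) (at u)"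
      using fB[OF u] fT[OF u] by (intro vd_inner) auto
    moreover have "(\<kappa>\<beta> u *\<^sub>R N\<beta> u) \<bullet> BT u + X u \<bullet> (- (\<tau>T u *\<^sub>R NT u)) = - (\<tau>T u * y u)"
      using ofr[OF u] coords[OF u] x0[OF u] ev[OF u]
      by (simp add: inner_add_right inner_diff_right)
    ultimately show ?thesis
      using Jopen u coords(3) by (metis (no_types, lifting) has_field_derivative_transform_within_open)
  qed
  have kt: "\<kappa>\<beta> u = - \<kappa>T u * y u \<and> \<tau>\<beta> u = \<kappa>T u * z u" if u: "u \<in> J" for u
  proof -
    have "(TT has_vector_derivative (- (\<kappa>\<beta> u *\<^sub>R X u) + \<tau>\<beta> u *\<^sub>R B\<beta> u)) (at u)"
      using has_vector_derivative_transform_within_open[OF _ Jopen u, of N\<beta>] fB[OF u] ev by blast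
    then have D: "- (\<kappa>\<beta> u *\<^sub>R X u) + \<tau>\<beta> u *\<^sub>R B\<beta> u = \<kappa>T u *\<^sub>R NT u"
      using fT[OF u] vector_derivative_unique_at by blast
    have Bb: "B\<beta> u = cross3 (X u) (TT u)" using fB[OF u] ev[OF u] by simp
    have b1: "B\<beta> u \<bullet> NT u = z u"
      using Bb triple[of "X u" "TT u" "NT u"] fT[OF u] coords[OF u] by simp
    have b2: "B\<beta> u \<bullet> BT u = - y u"
      using Bb triple[of "X u" "TT u" "BT u"] ofr[OF u] coords[OF u] by simp
    have e1: "- (\<kappa>\<beta> u * y u) + \<tau>\<beta> u * z u = \<kappa>T u"
      using arg_cong[OF D, of "\<lambda>w. w \<bullet> NT u"] b1 coords[OF u] ofr[OF u]
      by (simp add: inner_add_left inner_diff_left)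
    have e2: "- (\<kappa>\<beta> u * z u) - \<tau>\<beta> u * y u = 0"
      using arg_cong[OF D, of "\<lambda>w. w \<bullet> BT u"] b2 coords[OF u] ofr[OF u]
      by (simp add: inner_add_left inner_diff_left)
    show ?thesis using solve2[OF e1 e2 yz1[OF u]] by simp
  qed
  define f where "f = (\<lambda>v. Complex (z v) (y v))"
  have contf: "continuous_on J f"
  proof -
    have "continuous_on J y" "continuous_on J z"
      using dy dz by (meson DERIV_isCont continuous_at_imp_continuous_on)+
    then show ?thesis unfolding f_def Complex_eq by (intro continuous_intros)
  qed
  have fnz: "f v \<noteq> 0" if "v \<in> J" for v
    using yz1[OF that] by (auto simp: f_def complex_eq_iff)
  obtain g where contg: "continuous_on J g" and g: "\<And>v. v \<in> J \<Longrightarrow> f v = exp (g v)"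
    using continuous_logarithm_on_contractible[OF contf convex_imp_contractible[OF Jconv]] fnz
    by metis
  define \<phi> where "\<phi> = (\<lambda>v. Im (g v))"
  have sc: "y v = sin (\<phi> v) \<and> z v = cos (\<phi> v)" if v: "v \<in> J" for v
  proof -
    have zv: "z v = exp (Re (g v)) * cos (\<phi> v)"
      using arg_cong[OF g[OF v], of Re] by (simp add: f_def Re_exp \<phi>_def)
    have yv: "y v = exp (Re (g v)) * sin (\<phi> v)"
      using arg_cong[OF g[OF v], of Im] by (simp add: f_def Im_exp \<phi>_def)
    have "(y v)\<^sup>2 + (z v)\<^sup>2 = (exp (Re (g v)))\<^sup>2 * ((sin (\<phi> v))\<^sup>2 + (cos (\<phi> v))\<^sup>2)"
      unfolding zv yv by (simp only: power_mult_distrib distrib_left)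
    then have "(exp (Re (g v)))\<^sup>2 = 1" using yz1[OF v] by simp
    then have "exp (Re (g v)) = 1"
      by (metis abs_exp_cancel abs_one real_sqrt_abs real_sqrt_one)
    then show ?thesis using zv yv by simp
  qed
  have contphi: "continuous_on J \<phi>" unfolding \<phi>_def using contg by (intro continuous_intros)
  have dphi: "(\<phi> has_real_derivative \<tau>T u) (at u)" if u: "u \<in> J" for u
  proof -
    obtain d1 where d1: "d1 > 0" "ball u d1 \<subseteq> J" using Jopen u open_contains_ball by blast
    have "isCont \<phi> u" using contphi Jopen u continuous_on_eq_continuous_at by blast
    then obtain d2 where d2: "d2 > 0" "\<And>v. v \<noteq> u \<and> norm (v - u) < d2 \<Longrightarrow> norm (\<phi> v - \<phi> u) < pi/2"
      unfolding isCont_def LIM_eq by (meson pi_half_gt_zero)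
    define h where "h = (\<lambda>v. y v * z u - z v * y u)"
    have dh: "(h has_real_derivative \<tau>T u) (at u)"
    proof -
      have "(h has_real_derivative (\<tau>T u * z u) * z u - (- (\<tau>T u * y u)) * y u) (at u)"
        unfolding h_def by (intro DERIV_diff DERIV_cmult_right dy[OF u] dz[OF u])
      moreover have "(\<tau>T u * z u) * z u - (- (\<tau>T u * y u)) * y u = \<tau>T u * ((y u)\<^sup>2 + (z u)\<^sup>2)"
        by (simp add: algebra_simps power2_eq_square)
      then have "(\<tau>T u * z u) * z u - (- (\<tau>T u * y u)) * y u = \<tau>T u" using yz1[OF u] by simp
      ultimately show ?thesis by simp
    qed
    have hu: "h u = 0" unfolding h_def by simp
    have "(arcsin has_real_derivative 1) (at (h u))"
      using DERIV_arcsin[of 0] hu by simp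
    from DERIV_chain2[OF this dh]
    have A: "((\<lambda>v. arcsin (h v)) has_real_derivative \<tau>T u) (at u)" by simp
    have D: "((\<lambda>v. \<phi> u + arcsin (h v)) has_real_derivative \<tau>T u) (at u)"
      using DERIV_add[OF DERIV_const A] by simp
    show ?thesis
    proof (rule has_field_derivative_transform_within_open[OF D, of "ball u (min d1 d2)"])
      fix v assume v: "v \<in> ball u (min d1 d2)"
      then have vJ: "v \<in> J" using d1 by auto
      have "\<bar>\<phi> v - \<phi> u\<bar> < pi/2"
      proof (cases "v = u")
        case False then show ?thesis using d2(2)[of v] v by (auto simp: dist_norm)
      qed simp
      moreover have "h v = sin (\<phi> v - \<phi> u)"
        using sc[OF vJ] sc[OF u] by (simp add: h_def sin_diff)
      ultimately have "arcsin (h v) = \<phi> v - \<phi> u"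
        using arcsin_sin[of "\<phi> v - \<phi> u"] abs_less_iff[of "\<phi> v - \<phi> u" "pi/2"] by auto
      then show "\<phi> u + arcsin (h v) = \<phi> v" by simp
    qed (use d1 d2 in auto)
  qed
  have part1: "\<exists>\<phi>. (\<forall>u\<in>sT ` I. (\<phi> has_real_derivative \<tau>T u) (at u)) \<and>
              (\<forall>u\<in>sT ` I. \<kappa>\<beta> u = - \<kappa>T u * sin (\<phi> u) \<and> \<tau>\<beta> u = \<kappa>T u * cos (\<phi> u))"
    using dphi kt sc unfolding J_def by (intro exI[of _ \<phi>]) auto
  have part2: "\<kappa>T u = sqrt ((\<kappa>\<beta> u)\<^sup>2 + (\<tau>\<beta> u)\<^sup>2) \<and>
              (\<lambda>v. \<tau>\<beta> v / \<kappa>\<beta> v) differentiable (at u) \<and>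
              \<tau>T u = (\<kappa>\<beta> u)\<^sup>2 / ((\<kappa>\<beta> u)\<^sup>2 + (\<tau>\<beta> u)\<^sup>2) * deriv (\<lambda>v. \<tau>\<beta> v / \<kappa>\<beta> v) u"
    if u: "u \<in> J" for u
  proof -
    have kTp: "\<kappa>T u > 0" using fT[OF u] by blast
    have ss: "(\<kappa>\<beta> u)\<^sup>2 + (\<tau>\<beta> u)\<^sup>2 = (\<kappa>T u)\<^sup>2"
    proof -
      have "(\<kappa>\<beta> u)\<^sup>2 + (\<tau>\<beta> u)\<^sup>2 = (\<kappa>T u)\<^sup>2 * ((y u)\<^sup>2 + (z u)\<^sup>2)"
        using kt[OF u] by (simp add: power_mult_distrib algebra_simps)
      then show ?thesis using yz1[OF u] by simp
    qed
    have s1: "\<kappa>T u = sqrt ((\<kappa>\<beta> u)\<^sup>2 + (\<tau>\<beta> u)\<^sup>2)" using ss kTp by simp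
    have ynz: "y v \<noteq> 0" if "v \<in> J" for v using kt[OF that] fB[OF that] by auto
    have eqq: "- (z v / y v) = \<tau>\<beta> v / \<kappa>\<beta> v" if "v \<in> J" for v
      using kt[OF that] fT[OF that] ynz[OF that] by (auto simp: field_simps)
    have "((\<lambda>v. - (z v / y v)) has_real_derivative
          - (((- (\<tau>T u * y u)) * y u - z u * (\<tau>T u * z u)) / (y u * y u))) (at u)"
      by (intro derivative_intros dy[OF u] dz[OF u] ynz[OF u])
    moreover have "- (((- (\<tau>T u * y u)) * y u - z u * (\<tau>T u * z u)) / (y u * y u)) = \<tau>T u / (y u)\<^sup>2"
    proof -
      have "- (((- (\<tau>T u * y u)) * y u - z u * (\<tau>T u * z u)) / (y u * y u)) = \<tau>T u * ((y u)\<^sup>2 + (z u)\<^sup>2) / (y u)\<^sup>2"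
        by (rule quot_aux)
      then show ?thesis using yz1[OF u] by simp
    qed
    ultimately have Dq: "((\<lambda>v. \<tau>\<beta> v / \<kappa>\<beta> v) has_real_derivative \<tau>T u / (y u)\<^sup>2) (at u)"
      using has_field_derivative_transform_within_open[OF _ Jopen u, of "\<lambda>v. - (z v / y v)"] eqq by auto
    have s2: "(\<lambda>v. \<tau>\<beta> v / \<kappa>\<beta> v) differentiable (at u)" using Dq real_differentiable_def by blast
    have "(\<kappa>\<beta> u)\<^sup>2 / ((\<kappa>\<beta> u)\<^sup>2 + (\<tau>\<beta> u)\<^sup>2) * deriv (\<lambda>v. \<tau>\<beta> v / \<kappa>\<beta> v) u
        = (\<kappa>T u * y u)\<^sup>2 / (\<kappa>T u)\<^sup>2 * (\<tau>T u / (y u)\<^sup>2)"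
      using DERIV_imp_deriv[OF Dq] ss kt[OF u] by (simp add: power_mult_distrib)
    also have "\<dots> = \<tau>T u" using kTp ynz[OF u] by (simp add: field_simps)
    finally show ?thesis using s1 s2 by simp
  qed
  show ?thesis using part1 part2 unfolding J_def by blast
qed

end
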